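(* For $x$ sufficiently large, let $r=\pi\!\left(2\frac{\log x}{\log\log x}\right)$ and let $$\mathcal{A}(x)=\left\{(a_1,\dots,a_r)\in\mathbb{Z}_{\ge 0}^r:\ \sum_{j=1}^r a_j\log p_j\le\log x,\ \ a_i\ge \left\lfloor \frac{p_j}{p_i}\right\rfloor a_j \text{ for all } 1\le i<j\le r\right\}.$$ Then $\mathcal{J}(x)\le \#\mathcal{A}(x)$.
   Context: $p_1=2<p_2=3<\cdots$ is the sequence of primes and $\pi(y)$ the number of primes $\le y$. A positive integer $n$ is a Jordan-Pólya number if it can be written as a product of factorials, i.e. $n=a_1!\cdots a_s!$ for some $s\ge1$ and positive integers $a_i$; $\mathcal{J}(x)$ is the number of Jordan-Pólya numbers $\le x$. $\log$ is the natural logarithm. *)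

theory Defs
  imports "HOL-Computational_Algebra.Primes" "HOL-Library.Infinite_Set" Complex_Main
begin

text \<open>The j-th prime p_j, 1-indexed: p_1 = 2, p_2 = 3, ...\<close>
definition nth_prime :: "nat \<Rightarrow> nat" where
  "nth_prime j = enumerate {p::nat. prime p} (j - 1)"

definition prime_pi :: "real \<Rightarrow> nat" where
  "prime_pi y = card {p::nat. prime p \<and> real p \<le> y}"

definition jordan_polya :: "nat \<Rightarrow> bool" where
  "jordan_polya n \<longleftrightarrow> n > 0 \<and>
     (\<exists>as::nat list. as \<noteq> [] \<and> (\<forall>a\<in>set as. a > 0) \<and> n = prod_list (map fact as))"

definition JP_count :: "real \<Rightarrow> nat" where
  "JP_count x = card {n::nat. jordan_polya n \<and> real n \<le> x}"

text \<open>The set A(x); r-tuples are encoded as functions nat => nat supported on {1..r}.\<close>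
definition JP_A :: "real \<Rightarrow> (nat \<Rightarrow> nat) set" where
  "JP_A x = (let r = prime_pi (2 * ln x / ln (ln x)) in
     {a. (\<forall>i. i \<notin> {1..r} \<longrightarrow> a i = 0)
         \<and> (\<Sum>j=1..r. real (a j) * ln (real (nth_prime j))) \<le> ln x
         \<and> (\<forall>i j. 1 \<le> i \<and> i < j \<and> j \<le> r \<longrightarrow>
               a i \<ge> (nth_prime j div nth_prime i) * a j)})"

end

theory Submission imports Defs "HOL-Real_Asymp.Real_Asymp" "HOL-Library.FuncSet" begin

lemma pow_fact_le_exp: "(x::real) \<ge> 0 \<Longrightarrow> x ^ n / fact n \<le> exp x"
proof -
  assume "x \<ge> 0"
  have "(\<Sum>k\<in>{n}. x ^ k / fact k) \<le> (\<Sum>k. x ^ k / fact k)"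
    using \<open>0 \<le> x\<close> summable_exp_generic[of x]
    by (intro sum_le_suminf) (auto simp: divide_inverse ac_simps)
  also have "\<dots> = exp x" by (simp add: exp_def divide_inverse ac_simps)
  finally show ?thesis by simp
qed

lemma ln_fact_lower: "n \<ge> 1 \<Longrightarrow> real n * ln (real n) - real n \<le> ln (real (fact n))"
proof -
  assume n: "n \<ge> 1"
  have "real n ^ n / fact n \<le> exp (real n)" by (rule pow_fact_le_exp) simp
  hence "real n ^ n \<le> exp (real n) * fact n"
    by (simp add: divide_le_eq)
  hence "ln (real n ^ n) \<le> ln (exp (real n) * fact n)"
    using n by (subst ln_le_cancel_iff) auto
  also have "\<dots> = real n + ln (fact n)" by (simp add: ln_mult)
  finally show ?thesis using n by (simp add: ln_realpow)
qed

lemma mult_fact_Suc_aux: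
  fixes p k :: nat assumes p: "prime p"
  shows "card {e\<in>{1..Suc k}. p ^ e dvd Suc k} = multiplicity p (Suc k)"
proof -
  let ?m = "multiplicity p (Suc k)"
  have p2: "p \<ge> 2" using p prime_ge_2_nat by blast
  have "p ^ ?m dvd Suc k" by (simp add: multiplicity_dvd)
  hence "p ^ ?m \<le> Suc k" by (intro dvd_imp_le) auto
  moreover have "?m < 2 ^ ?m" by (rule less_exp)
  moreover have "2 ^ ?m \<le> p ^ ?m" using p2 by (intro power_mono) auto
  ultimately have "?m \<le> Suc k" by linarith
  have "{e\<in>{1..Suc k}. p ^ e dvd Suc k} = {1..?m}"
    using \<open>?m \<le> Suc k\<close> power_dvd_iff_le_multiplicity[of "Suc k" p] p2
    by auto
  thus ?thesis by simp
qed

lemma div_Suc_aux: "(if d dvd Suc k then 1 else 0) + k div d = Suc k div (d::nat)"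
  by (simp add: div_Suc dvd_eq_mod_eq_0)

lemma legendre:
  fixes p k :: nat assumes p: "prime p"
  shows "multiplicity p (fact k) = (\<Sum>e=1..k. k div p ^ e)"
proof (induction k)
  case 0
  then show ?case by simp
next
  case (Suc k)
  have p2: "p \<ge> 2" using p prime_ge_2_nat by blast
  have "multiplicity p (fact (Suc k) :: nat) = multiplicity p (Suc k) + multiplicity p (fact k :: nat)"
  proof -
    have "(fact (Suc k) :: nat) = Suc k * fact k" by (simp only: fact_Suc of_nat_id)
    moreover have "(fact k :: nat) \<noteq> 0" by simp
    ultimately show ?thesis using prime_elem_multiplicity_mult_distrib[OF prime_imp_prime_elem[OF p], of "Suc k" "fact k :: nat"]
      by (simp only: Suc_not_Zero simp_thms)
  qed
  also have "multiplicity p (Suc k) = card {e\<in>{1..Suc k}. p ^ e dvd Suc k}"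
    using mult_fact_Suc_aux[OF p] by simp
  also have "\<dots> = (\<Sum>e=1..Suc k. if p ^ e dvd Suc k then 1 else 0)"
    by (subst card_eq_sum, rule sum.inter_filter) simp
  also have "multiplicity p (fact k :: nat) = (\<Sum>e=1..Suc k. k div p ^ e)"
  proof -
    have "k < 2 ^ Suc k" using less_exp[of "Suc k"] by linarith
    also have "(2::nat) ^ Suc k \<le> p ^ Suc k" using p2 by (intro power_mono) auto
    finally have "k div p ^ Suc k = 0" by simp
    thus ?thesis using Suc.IH by (simp add: sum.cl_ivl_Suc)
  qed
  also have "(\<Sum>e=1..Suc k. if p ^ e dvd Suc k then 1 else 0) + (\<Sum>e=1..Suc k. k div p ^ e)
      = (\<Sum>e=1..Suc k. Suc k div p ^ e)"
    by (subst sum.distrib[symmetric], intro sum.cong) (simp_all add: div_Suc_aux)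
  finally show ?case .
qed

lemma div_term_ineq:
  fixes p q k e :: nat assumes "p > 0" "e \<ge> 1"
  shows "(q div p) * (k div q ^ e) \<le> k div p ^ e"
proof -
  let ?c = "q div p"
  have cp: "?c * p \<le> q" by (simp add: div_times_less_eq_dividend)
  have "?c * p ^ e \<le> q ^ e"
  proof (cases "?c = 0")
    case True then show ?thesis by simp
  next
    case False
    have "?c \<le> ?c ^ e" using False assms(2) by (simp add: self_le_power)
    hence "?c * p ^ e \<le> ?c ^ e * p ^ e" by simp
    also have "\<dots> = (?c * p) ^ e" by (simp add: power_mult_distrib)
    also have "\<dots> \<le> q ^ e" using cp by (intro power_mono) auto
    finally show ?thesis .
  qed
  hence "?c * (k div q ^ e) * p ^ e \<le> (k div q ^ e) * q ^ e"
    by (metis mult.assoc mult.commute mult_le_mono2)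
  also have "\<dots> \<le> k" by (simp add: div_times_less_eq_dividend)
  finally show ?thesis using assms(1) by (simp add: less_eq_div_iff_mult_less_eq)
qed

definition goodn :: "nat \<Rightarrow> bool" where
  "goodn n \<longleftrightarrow> (\<forall>p q. prime p \<longrightarrow> prime q \<longrightarrow> p < q \<longrightarrow>
      (q div p) * multiplicity q n \<le> multiplicity p n)"

lemma good_fact: "goodn (fact k)"
  unfolding goodn_def
proof (intro allI impI)
  fix p q :: nat assume p: "prime p" and q: "prime q" and "p < q"
  have "(q div p) * multiplicity q (fact k :: nat) = (\<Sum>e=1..k. (q div p) * (k div q ^ e))"
    by (simp add: legendre[OF q] sum_distrib_left)
  also have "\<dots> \<le> (\<Sum>e=1..k. k div p ^ e)"
    using p by (intro sum_mono div_term_ineq) (auto simp: prime_gt_0_nat)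
  also have "\<dots> = multiplicity p (fact k :: nat)" by (simp add: legendre[OF p])
  finally show "(q div p) * multiplicity q (fact k :: nat) \<le> multiplicity p (fact k :: nat)" .
qed

lemma good_mult: "n \<noteq> 0 \<Longrightarrow> m \<noteq> 0 \<Longrightarrow> goodn n \<Longrightarrow> goodn m \<Longrightarrow> goodn (n * m)"
  unfolding goodn_def
proof (intro allI impI)
  fix p q :: nat assume nz: "n \<noteq> 0" "m \<noteq> 0"
    and gn: "\<forall>p q. prime p \<longrightarrow> prime q \<longrightarrow> p < q \<longrightarrow> q div p * multiplicity q n \<le> multiplicity p n"
    and gm: "\<forall>p q. prime p \<longrightarrow> prime q \<longrightarrow> p < q \<longrightarrow> q div p * multiplicity q m \<le> multiplicity p m"
    and p: "prime p" and q: "prime q" and pq: "p < q"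
  have 1: "multiplicity p (n * m) = multiplicity p n + multiplicity p m"
    by (rule prime_elem_multiplicity_mult_distrib[OF prime_imp_prime_elem[OF p] nz])
  have 2: "multiplicity q (n * m) = multiplicity q n + multiplicity q m"
    by (rule prime_elem_multiplicity_mult_distrib[OF prime_imp_prime_elem[OF q] nz])
  have "q div p * multiplicity q n \<le> multiplicity p n" using gn p q pq by blast
  moreover have "q div p * multiplicity q m \<le> multiplicity p m" using gm p q pq by blast
  ultimately show "q div p * multiplicity q (n * m) \<le> multiplicity p (n * m)"
    unfolding 1 2 by (simp add: add_mult_distrib2)
qed

lemma good_prod: "goodn (prod_list (map fact as)) \<and> prod_list (map fact as) \<noteq> (0::nat)"
proof (induction as)
  case Nil then show ?case by (simp add: goodn_def)
next
  case (Cons a as)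
  then show ?case using good_mult[of "fact a" "prod_list (map fact as)"] good_fact[of a] by simp
qed

lemma prime_dvd_prod_fact: "prime (p::nat) \<Longrightarrow> p dvd prod_list (map fact as) \<Longrightarrow> \<exists>a\<in>set as. p \<le> a"
proof (induction as)
  case Nil then show ?case by simp 
next
  case (Cons a as)
  then show ?case by (auto simp: prime_dvd_mult_iff prime_dvd_fact_iff)
qed

lemma fact_dvd_prod: "a \<in> set as \<Longrightarrow> (fact a :: nat) dvd prod_list (map fact as)"
  by (induction as) auto


lemma nth_prime_prime: "prime (nth_prime i)"
  unfolding nth_prime_def using enumerate_in_set[OF primes_infinite] by blast

lemma nth_prime_mono: "1 \<le> i \<Longrightarrow> i < j \<Longrightarrow> nth_prime i < nth_prime j"
  unfolding nth_prime_def by (intro enumerate_mono[OF _ primes_infinite]) simp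

lemma nth_prime_inj: "inj_on nth_prime {1..r}"
proof (rule inj_onI)
  fix i j assume "i \<in> {1..r}" "j \<in> {1..r}" "nth_prime i = nth_prime j"
  thus "i = j" using nth_prime_mono[of i j] nth_prime_mono[of j i]
    by (metis atLeastAtMost_iff less_irrefl nat_neq_iff)
qed

lemma prime_is_nth:
  assumes p: "prime p" and py: "real p \<le> y"
  shows "\<exists>i. 1 \<le> i \<and> i \<le> prime_pi y \<and> nth_prime i = p"
proof -
  let ?P = "{p::nat. prime p}"
  obtain n where n: "enumerate ?P n = p" using enumerate_Ex[OF primes_infinite] p by blast
  have fin: "finite {q::nat. prime q \<and> real q \<le> y}"
    by (rule finite_subset[of _ "{..nat \<lfloor>y\<rfloor>}"]) (auto intro: le_nat_floor)
  have inj: "inj_on (enumerate ?P) {..n}"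
    using strict_mono_enumerate[OF primes_infinite] by (simp add: strict_mono_imp_inj_on)
  have sub: "enumerate ?P ` {..n} \<subseteq> {q::nat. prime q \<and> real q \<le> y}"
  proof
    fix q assume "q \<in> enumerate ?P ` {..n}"
    then obtain m where m: "m \<le> n" "q = enumerate ?P m" by auto
    have "q \<le> p" by (metis enumerate_mono_le_iff[OF primes_infinite] m n)
    moreover have "prime q" using m enumerate_in_set[OF primes_infinite] by blast
    ultimately show "q \<in> {q::nat. prime q \<and> real q \<le> y}" using py by simp
  qed
  have "Suc n = card (enumerate ?P ` {..n})" using card_image[OF inj] by simp
  also have "\<dots> \<le> prime_pi y" unfolding prime_pi_def by (rule card_mono[OF fin sub])
  finally show ?thesis using n by (intro exI[of _ "Suc n"]) (simp add: nth_prime_def)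
qed

lemma sum_nonneg_le_member:
  fixes f :: "nat \<Rightarrow> real"
  assumes "finite A" "j \<in> A" "\<And>i. i \<in> A \<Longrightarrow> f i \<ge> 0"
  shows "f j \<le> sum f A"
  using member_le_sum[of j A f] assms by auto

lemma JP_A_finite:
  assumes x: "x > 1"
  shows "finite (JP_A x)"
proof -
  define r where "r = prime_pi (2 * ln x / ln (ln x))"
  define B where "B = nat \<lfloor>ln x / ln 2\<rfloor>"
  let ?T = "{a::nat\<Rightarrow>nat. \<forall>i. (i \<notin> {1..r} \<longrightarrow> a i = 0) \<and> a i \<le> B}"
  have "JP_A x \<subseteq> ?T"
  proof
    fix a assume a: "a \<in> JP_A x"
    hence supp: "\<forall>i. i \<notin> {1..r} \<longrightarrow> a i = 0"
      and sm: "(\<Sum>j=1..r. real (a j) * ln (real (nth_prime j))) \<le> ln x"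
      unfolding JP_A_def r_def Let_def by auto
    have "a i \<le> B" for i
    proof (cases "i \<in> {1..r}")
      case False thus ?thesis using supp by simp
    next
      case True
      have ge2: "\<And>j. real (nth_prime j) \<ge> 2"
        using nth_prime_prime prime_ge_2_nat by (metis of_nat_le_iff of_nat_numeral)
      have ge1: "\<And>j. real (nth_prime j) \<ge> 1"
        using nth_prime_prime prime_ge_1_nat by (metis of_nat_1 of_nat_le_iff)
      have "real (a i) * ln (real (nth_prime i)) \<le> (\<Sum>j=1..r. real (a j) * ln (real (nth_prime j)))"
        using True ge1 by (intro sum_nonneg_le_member) (auto intro!: mult_nonneg_nonneg ln_ge_zero)
      also have "\<dots> \<le> ln x" by (rule sm)
      finally have 1: "real (a i) * ln (real (nth_prime i)) \<le> ln x" .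
      have "real (a i) * ln 2 \<le> real (a i) * ln (real (nth_prime i))"
        using ge2[of i] by (intro mult_left_mono) auto
      with 1 have "real (a i) * ln 2 \<le> ln x" by linarith
      hence "real (a i) \<le> ln x / ln 2" by (simp add: le_divide_eq)
      thus ?thesis unfolding B_def by (rule le_nat_floor)
    qed
    thus "a \<in> ?T" using supp by blast
  qed
  moreover have "?T \<subseteq> (\<lambda>g i. if i \<in> {1..r} then g i else 0) ` (PiE {1..r} (\<lambda>_. {..B}))"
  proof
    fix a assume a: "a \<in> ?T"
    have "a = (\<lambda>i. if i \<in> {1..r} then restrict a {1..r} i else 0)"
      using a by (auto simp: fun_eq_iff)
    moreover have "restrict a {1..r} \<in> PiE {1..r} (\<lambda>_. {..B})" using a by auto
    ultimately show "a \<in> (\<lambda>g i. if i \<in> {1..r} then g i else 0) ` (PiE {1..r} (\<lambda>_. {..B}))"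
      by blast
  qed
  moreover have "finite (PiE {1..r} (\<lambda>_. {..B::nat}))" by (intro finite_PiE) auto
  ultimately show ?thesis by (meson finite_imageI finite_subset)
qed

lemma tlogt_mono:
  fixes t y :: real
  assumes "exp 1 \<le> y" "y \<le> t"
  shows "y * ln y - y \<le> t * ln t - t"
proof -
  have ypos: "y > 0" using assms(1) exp_gt_zero[of 1] by linarith
  have ly: "ln y \<ge> 1" using assms(1) ypos by (metis ln_exp ln_le_cancel_iff exp_gt_zero)
  have "ln y \<le> ln t" using assms ypos by simp
  hence "t * ln y \<le> t * ln t" using assms ypos by (intro mult_left_mono) auto
  moreover have "(t - y) * (ln y - 1) \<ge> 0" using assms ly by (intro mult_nonneg_nonneg) auto
  ultimately show ?thesis by (simp add: algebra_simps)
qed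

theorem mainTheorem6:
  shows "\<exists>x0::real. \<forall>x\<ge>x0. JP_count x \<le> card (JP_A x)"
proof -
  have ev: "eventually (\<lambda>x::real. x \<ge> 3 \<and>
      ln x < (2 * ln x / ln (ln x)) * ln (2 * ln x / ln (ln x)) - 2 * ln x / ln (ln x) \<and>
      exp 1 \<le> 2 * ln x / ln (ln x)) at_top"
  proof -
    have e1: "eventually (\<lambda>x::real. x \<ge> 3) at_top" by real_asymp
    have e2: "eventually (\<lambda>x::real. ln x < (2 * ln x / ln (ln x)) * ln (2 * ln x / ln (ln x)) - 2 * ln x / ln (ln x)) at_top"
      by real_asymp
    have e3: "eventually (\<lambda>x::real. exp 1 \<le> 2 * ln x / ln (ln x)) at_top" by real_asymp
    show ?thesis using eventually_conj[OF e1 eventually_conj[OF e2 e3]] by simp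
  qed
  then obtain x0 :: real where x0: "\<And>x::real. x \<ge> x0 \<Longrightarrow> x \<ge> 3 \<and>
      ln x < (2 * ln x / ln (ln x)) * ln (2 * ln x / ln (ln x)) - 2 * ln x / ln (ln x) \<and>
      exp 1 \<le> 2 * ln x / ln (ln x)"
    unfolding eventually_at_top_linorder by blast
  show ?thesis
  proof (intro exI[of _ x0] allI impI)
    fix x :: real assume "x \<ge> x0"
    define y where "y = 2 * ln x / ln (ln x)"
    define r where "r = prime_pi y"
    have x3: "x \<ge> 3" and H1: "ln x < y * ln y - y" and H2: "exp 1 \<le> y"
      using x0[OF \<open>x \<ge> x0\<close>] unfolding y_def by auto
    define S where "S = {n::nat. jordan_polya n \<and> real n \<le> x}"
    have K: "real p \<le> y" if n: "n \<in> S" and p: "prime p" and pd: "p dvd n" for n p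
    proof (rule ccontr)
      assume "\<not> real p \<le> y"
      hence py: "real p > y" by simp
      from n obtain as where as: "n = prod_list (map fact as)" and nle: "real n \<le> x" and npos: "n > 0"
        unfolding S_def jordan_polya_def by blast
      obtain a where a: "a \<in> set as" "p \<le> a" using prime_dvd_prod_fact[OF p] pd as by blast
      have "(fact a :: nat) \<le> n" using fact_dvd_prod[OF a(1)] as npos by (intro dvd_imp_le) auto
      moreover have "(fact p :: nat) \<le> fact a" using a(2) by (rule fact_mono)
      ultimately have "real (fact p :: nat) \<le> x" using nle by linarith
      hence "ln (real (fact p :: nat)) \<le> ln x" using x3 by (subst ln_le_cancel_iff) auto
      moreover have "real p * ln (real p) - real p \<le> ln (real (fact p :: nat))"
        using ln_fact_lower[of p] p prime_ge_1_nat by blast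
      moreover have "y * ln y - y \<le> real p * ln (real p) - real p"
        using tlogt_mono[OF H2] py by simp
      ultimately show False using H1 by linarith
    qed
    define F where "F n = (\<lambda>i. if i \<in> {1..r} then multiplicity (nth_prime i) n else 0)" for n :: nat
    have inj: "inj_on F S"
    proof (rule inj_onI)
      fix n m assume n: "n \<in> S" and m: "m \<in> S" and Fe: "F n = F m"
      have nz: "n \<noteq> 0" "m \<noteq> 0" using n m unfolding S_def jordan_polya_def by auto
      have "normalize n = normalize m"
      proof (rule multiplicity_eq_imp_eq[OF nz])
        fix p :: nat assume p: "prime p"
        show "multiplicity p n = multiplicity p m"
        proof (cases "p dvd n \<or> p dvd m")
          case True
          hence "real p \<le> y" using K n m p by blast
          then obtain i where i: "1 \<le> i" "i \<le> r" "nth_prime i = p"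
            using prime_is_nth[OF p] unfolding r_def by blast
          have "F n i = F m i" using Fe by simp
          thus ?thesis using i unfolding F_def by simp
        next
          case False thus ?thesis by (simp add: not_dvd_imp_multiplicity_0)
        qed
      qed
      thus "n = m" by simp
    qed
    have img: "F ` S \<subseteq> JP_A x"
    proof
      fix a assume "a \<in> F ` S"
      then obtain n where n: "n \<in> S" and a: "a = F n" by blast
      from n obtain as where as: "n = prod_list (map fact as)" and nle: "real n \<le> x" and npos: "n > 0"
        unfolding S_def jordan_polya_def by blast
      have good: "goodn n" using good_prod[of as] as by simp
      have supp: "\<forall>i. i \<notin> {1..r} \<longrightarrow> a i = 0" unfolding a F_def by simp
      define g where "g p = real (multiplicity p n) * ln (real p)" for p
      have pf: "prime_factors n \<subseteq> nth_prime ` {1..r}"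
      proof
        fix p assume "p \<in> prime_factors n"
        hence p: "prime p" "p dvd n" by (auto simp: in_prime_factors_iff)
        hence "real p \<le> y" using K n by blast
        then obtain i where "1 \<le> i" "i \<le> r" "nth_prime i = p"
          using prime_is_nth[OF p(1)] unfolding r_def by blast
        thus "p \<in> nth_prime ` {1..r}" by force
      qed
      have "(\<Sum>j=1..r. real (a j) * ln (real (nth_prime j))) = (\<Sum>j\<in>{1..r}. g (nth_prime j))"
        unfolding a F_def g_def by (intro sum.cong) auto
      also have "\<dots> = sum g (nth_prime ` {1..r})"
        by (subst sum.reindex[OF nth_prime_inj]) (simp add: comp_def)
      also have "\<dots> = sum g (prime_factors n)"
      proof (rule sum.mono_neutral_right[OF _ pf])
        show "finite (nth_prime ` {1..r})" by simp
        show "\<forall>p\<in>nth_prime ` {1..r} - prime_factors n. g p = 0"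
        proof
          fix p assume "p \<in> nth_prime ` {1..r} - prime_factors n"
          hence "prime p" "p \<notin> prime_factors n" using nth_prime_prime by auto
          hence "\<not> p dvd n" using npos by (auto simp: in_prime_factors_iff)
          thus "g p = 0" unfolding g_def by (simp add: not_dvd_imp_multiplicity_0)
        qed
      qed
      also have "\<dots> = (\<Sum>p\<in>prime_factors n. ln (real p ^ multiplicity p n))"
      proof (rule sum.cong[OF refl])
        fix p assume "p \<in> prime_factors n"
        hence "real p > 0" using in_prime_factors_imp_prime prime_gt_0_nat by (metis of_nat_0_less_iff)
        thus "g p = ln (real p ^ multiplicity p n)" unfolding g_def by (simp add: ln_realpow)
      qed
      also have "\<dots> = ln (\<Prod>p\<in>prime_factors n. real p ^ multiplicity p n)"
      proof (rule ln_prod[symmetric])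
        show "finite (prime_factors n)" by simp
        fix p assume "p \<in> prime_factors n"
        hence "real p > 0" using in_prime_factors_imp_prime prime_gt_0_nat by (metis of_nat_0_less_iff)
        thus "real p ^ multiplicity p n \<noteq> 0" by simp
      qed
      also have "(\<Prod>p\<in>prime_factors n. real p ^ multiplicity p n) = real (\<Prod>p\<in>prime_factors n. p ^ multiplicity p n)"
        by (simp only: of_nat_prod of_nat_power)
      also have "(\<Prod>p\<in>prime_factors n. p ^ multiplicity p n) = n"
        using prod_prime_factors[of n] npos by simp
      also have "ln (real n) \<le> ln x" using npos nle by (subst ln_le_cancel_iff) auto
      finally have sm: "(\<Sum>j=1..r. real (a j) * ln (real (nth_prime j))) \<le> ln x" .
      have dv: "\<forall>i j. 1 \<le> i \<and> i < j \<and> j \<le> r \<longrightarrow> a i \<ge> (nth_prime j div nth_prime i) * a j"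
      proof (intro allI impI)
        fix i j assume ij: "1 \<le> i \<and> i < j \<and> j \<le> r"
        hence "nth_prime i < nth_prime j" using nth_prime_mono by blast
        hence "(nth_prime j div nth_prime i) * multiplicity (nth_prime j) n \<le> multiplicity (nth_prime i) n"
          by (rule good[unfolded goodn_def, rule_format, OF nth_prime_prime nth_prime_prime])
        thus "a i \<ge> (nth_prime j div nth_prime i) * a j" using ij unfolding a F_def by simp
      qed
      have rr: "prime_pi (2 * ln x / ln (ln x)) = r" unfolding r_def y_def ..
      show "a \<in> JP_A x"
        unfolding JP_A_def Let_def rr mem_Collect_eq using supp sm dv by (intro conjI)
    qed
    have "JP_count x = card S" unfolding JP_count_def S_def by simp
    also have "\<dots> \<le> card (JP_A x)"
      by (rule card_inj_on_le[OF inj img JP_A_finite]) (use x3 in simp)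
    finally show "JP_count x \<le> card (JP_A x)" .
  qed
qed

end
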